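(* Let $\mathcal{G}$ be a groupoid, $\mathbb{K}$ a field, $(A,+,\cdot)$ a $\mathbb{K}$-cancellative $\mathbb{K}$-algebra with associated $\mathbb{K}$-cancellative semigroup $A'=(A,\cdot)$, and $\alpha = (\{ D_g \}, \{ \alpha_g \}, \{ w_{g,h} \})$ a groupoid twisted partial action of $\mathcal{G}$ on $A$ with each $w_{x,y} = k(x,y) \in \mathbb{K}$, so that $\alpha'=(\{D_g\},\{\alpha_g\},\sigma)$ with $\sigma(x,y)=k(x,y)$ is a groupoid twisted partial action of $\mathcal{G}$ on $A'$. Then the map $A' \rtimes_{\alpha',\sigma} \mathcal{G} \to (A \rtimes_{\alpha} \mathcal{G})'$, $a\delta_x\mapsto a\delta_x$, is a monomorphism of $\mathbb{K}$-semigroups, where $(A \rtimes_{\alpha} \mathcal{G})'$ is the $\mathbb{K}$-cancellative semigroup obtained from the algebra $A \rtimes_{\alpha} \mathcal{G}$ by forgetting addition.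
   Context: Groupoid: nonempty set with partial associative product, each $x$ with right identity $d(x)=x^{-1}x$, left identity $r(x)=xx^{-1}$ and inverse; $xy$ defined iff $d(x)=r(y)$; $\mathcal{G}^2$ composable pairs. A $\mathbb{K}$-semigroup is a semigroup with zero and compatible scalar action ($\alpha(\beta s)=(\alpha\beta)s$, $1s=s$, $\alpha(st)=(\alpha s)t=s(\alpha t)$, $0s=0$); $\mathbb{K}$-cancellative if $\alpha s=\beta s$, $s\neq0$ imply $\alpha=\beta$; a $\mathbb{K}$-algebra is $\mathbb{K}$-cancellative if its multiplicative semigroup is. For a unital ideal $I$ of $A$ with identity $1_I\ne0$, $\mathbb{K}$ is identified with $\mathbb{K}1_I$. Ring crossed product: for a groupoid twisted partial action $\alpha=(\{D_g\},\{\alpha_g\},\{w_{g,h}\})$ on $A$ (ideals $D_{r(g)}$ of $A$, $D_g$ ideals of $D_{r(g)}$, ring isomorphisms $\alpha_g:D_{g^{-1}}\to D_g$, invertible multipliers $w_{g,h}$ of $D_gD_{gh}$, satisfying the twisted partial action axioms), $A\rtimes_\alpha\mathcal{G}=\bigoplus_gD_g\delta_g$ with $(a\delta_x)(b\delta_y)=\alpha_x(\alpha_x^{-1}(a)b)w_{x,y}\delta_{xy}$ if $(x,y)\in\mathcal{G}^2$ and $0$ otherwise. Semigroup crossed product: for a groupoid twisted partial action $(\theta,\sigma)=(\{S_x\},\{\theta_x\},\sigma)$ of $\mathcal{G}$ on a $\mathbb{K}$-semigroup $S$ (monoid ideals $S_x\subseteq S_{r(x)}$, $\mathbb{K}$-linear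 semigroup isomorphisms $\theta_x:S_{x^{-1}}\to S_x$, $\sigma:\mathcal{G}\times\mathcal{G}\to\mathbb{K}$ satisfying the axioms, $\sigma(x,y)=0$ when $xy$ is undefined), let $L=\{a\delta_x: x\in\mathcal{G}, a\in S_x\}\cup\{0\}$ with $(a\delta_x)(b\delta_y)=\theta_x(\theta_x^{-1}(a)b)\sigma(x,y)\delta_{xy}$ if $xy$ is defined, $0$ otherwise, and $0$ absorbing; $S\rtimes_{\theta,\sigma}\mathcal{G}=L/I$ with $I=\{0\delta_x:x\in\mathcal{G}\}\cup\{0\}$. *)

theory Defs
  imports Main
begin

text \<open>A groupoid is a set G with a (total, in HOL) multiplication gm and inversion gi;
  the product gm x y is regarded as defined iff gdom x = gran y.\<close>

definition gdom :: "('g \<Rightarrow> 'g \<Rightarrow> 'g) \<Rightarrow> ('g \<Rightarrow> 'g) \<Rightarrow> 'g \<Rightarrow> 'g" where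
  "gdom gm gi x = gm (gi x) x"

definition gran :: "('g \<Rightarrow> 'g \<Rightarrow> 'g) \<Rightarrow> ('g \<Rightarrow> 'g) \<Rightarrow> 'g \<Rightarrow> 'g" where
  "gran gm gi x = gm x (gi x)"

definition composable :: "'g set \<Rightarrow> ('g \<Rightarrow> 'g \<Rightarrow> 'g) \<Rightarrow> ('g \<Rightarrow> 'g) \<Rightarrow> 'g \<Rightarrow> 'g \<Rightarrow> bool" where
  "composable G gm gi x y \<longleftrightarrow> x \<in> G \<and> y \<in> G \<and> gdom gm gi x = gran gm gi y"

definition groupoid :: "'g set \<Rightarrow> ('g \<Rightarrow> 'g \<Rightarrow> 'g) \<Rightarrow> ('g \<Rightarrow> 'g) \<Rightarrow> bool" where
  "groupoid G gm gi \<longleftrightarrow>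
     G \<noteq> {} \<and>
     (\<forall>x\<in>G. gi x \<in> G \<and> gi (gi x) = x) \<and>
     (\<forall>x y. composable G gm gi x y \<longrightarrow>
        gm x y \<in> G \<and> gdom gm gi (gm x y) = gdom gm gi y \<and> gran gm gi (gm x y) = gran gm gi x) \<and>
     (\<forall>x y z. composable G gm gi x y \<and> composable G gm gi y z \<longrightarrow>
        gm (gm x y) z = gm x (gm y z)) \<and>
     (\<forall>x\<in>G. gm x (gdom gm gi x) = x \<and> gm (gran gm gi x) x = x \<and>
        gdom gm gi (gdom gm gi x) = gdom gm gi x \<and> gran gm gi (gdom gm gi x) = gdom gm gi x \<and>
        gdom gm gi (gran gm gi x) = gran gm gi x \<and> gran gm gi (gran gm gi x) = gran gm gi x)"

text \<open>The algebra A is the whole (not necessarily unital) ring type 'a, with a scalar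
  action smul of the field 'k.\<close>

definition K_algebra :: "('k::field \<Rightarrow> 'a::ring \<Rightarrow> 'a) \<Rightarrow> bool" where
  "K_algebra smul \<longleftrightarrow>
     (\<forall>\<alpha> \<beta> a. smul \<alpha> (smul \<beta> a) = smul (\<alpha> * \<beta>) a) \<and>
     (\<forall>a. smul 1 a = a) \<and>
     (\<forall>\<alpha> a b. smul \<alpha> (a + b) = smul \<alpha> a + smul \<alpha> b) \<and>
     (\<forall>\<alpha> \<beta> a. smul (\<alpha> + \<beta>) a = smul \<alpha> a + smul \<beta> a) \<and>
     (\<forall>\<alpha> a b. smul \<alpha> (a * b) = smul \<alpha> a * b \<and> smul \<alpha> (a * b) = a * smul \<alpha> b)"

definition K_cancellative :: "('k \<Rightarrow> 's \<Rightarrow> 's) \<Rightarrow> 's \<Rightarrow> bool" where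
  "K_cancellative smul z \<longleftrightarrow> (\<forall>\<alpha> \<beta> s. smul \<alpha> s = smul \<beta> s \<and> s \<noteq> z \<longrightarrow> \<alpha> = \<beta>)"

definition alg_ideal :: "('k \<Rightarrow> 'a::ring \<Rightarrow> 'a) \<Rightarrow> 'a set \<Rightarrow> 'a set \<Rightarrow> bool" where
  "alg_ideal smul R I \<longleftrightarrow> I \<subseteq> R \<and> 0 \<in> I \<and>
     (\<forall>a\<in>I. \<forall>b\<in>I. a + b \<in> I) \<and> (\<forall>a\<in>I. - a \<in> I) \<and>
     (\<forall>r\<in>R. \<forall>a\<in>I. r * a \<in> I \<and> a * r \<in> I) \<and> (\<forall>\<alpha>. \<forall>a\<in>I. smul \<alpha> a \<in> I)"

definition unital_set :: "'a::ring set \<Rightarrow> bool" where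
  "unital_set I \<longleftrightarrow> (\<exists>u\<in>I. \<forall>a\<in>I. u * a = a \<and> a * u = a)"

inductive_set ideal_prod :: "'a::ring set \<Rightarrow> 'a set \<Rightarrow> 'a set" for I J where
  zero: "0 \<in> ideal_prod I J"
| prod: "a \<in> I \<Longrightarrow> b \<in> J \<Longrightarrow> a * b \<in> ideal_prod I J"
| add: "x \<in> ideal_prod I J \<Longrightarrow> y \<in> ideal_prod I J \<Longrightarrow> x + y \<in> ideal_prod I J"

text \<open>A multiplier of I is a pair (L,R); w a = L a and a w = R a.\<close>
definition is_multiplier :: "'a::ring set \<Rightarrow> ('a \<Rightarrow> 'a) \<times> ('a \<Rightarrow> 'a) \<Rightarrow> bool" where
  "is_multiplier I w \<longleftrightarrow>
     (\<forall>a\<in>I. fst w a \<in> I \<and> snd w a \<in> I) \<and>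
     (\<forall>a\<in>I. \<forall>b\<in>I. fst w (a + b) = fst w a + fst w b \<and> snd w (a + b) = snd w a + snd w b \<and>
        fst w (a * b) = fst w a * b \<and> snd w (a * b) = a * snd w b \<and>
        snd w a * b = a * fst w b)"

definition inverse_multiplier :: "'a::ring set \<Rightarrow> ('a \<Rightarrow> 'a) \<times> ('a \<Rightarrow> 'a) \<Rightarrow> ('a \<Rightarrow> 'a) \<times> ('a \<Rightarrow> 'a) \<Rightarrow> bool" where
  "inverse_multiplier I w w' \<longleftrightarrow> is_multiplier I w' \<and>
     (\<forall>a\<in>I. fst w (fst w' a) = a \<and> fst w' (fst w a) = a \<and> snd w (snd w' a) = a \<and> snd w' (snd w a) = a)"

definition invertible_multiplier :: "'a::ring set \<Rightarrow> ('a \<Rightarrow> 'a) \<times> ('a \<Rightarrow> 'a) \<Rightarrow> bool" where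
  "invertible_multiplier I w \<longleftrightarrow> is_multiplier I w \<and> (\<exists>w'. inverse_multiplier I w w')"

definition preim :: "('g \<Rightarrow> 'a set) \<Rightarrow> ('g \<Rightarrow> 'a \<Rightarrow> 'a) \<Rightarrow> ('g \<Rightarrow> 'g) \<Rightarrow> 'g \<Rightarrow> 'a set \<Rightarrow> 'a set" where
  "preim D \<alpha> gi h S = {a \<in> D (gi h). \<alpha> h a \<in> S}"

definition ring_twisted_partial_action ::
  "'g set \<Rightarrow> ('g \<Rightarrow> 'g \<Rightarrow> 'g) \<Rightarrow> ('g \<Rightarrow> 'g) \<Rightarrow> ('k::field \<Rightarrow> 'a::ring \<Rightarrow> 'a) \<Rightarrow>
   ('g \<Rightarrow> 'a set) \<Rightarrow> ('g \<Rightarrow> 'a \<Rightarrow> 'a) \<Rightarrow> ('g \<Rightarrow> 'g \<Rightarrow> ('a \<Rightarrow> 'a) \<times> ('a \<Rightarrow> 'a)) \<Rightarrow> bool" where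
  "ring_twisted_partial_action G gm gi smul D \<alpha> w \<longleftrightarrow>
     (\<forall>g\<in>G. alg_ideal smul UNIV (D (gran gm gi g)) \<and>
            alg_ideal smul (D (gran gm gi g)) (D g) \<and>
            bij_betw (\<alpha> g) (D (gi g)) (D g) \<and>
            (\<forall>a\<in>D (gi g). \<forall>b\<in>D (gi g). \<alpha> g (a + b) = \<alpha> g a + \<alpha> g b \<and> \<alpha> g (a * b) = \<alpha> g a * \<alpha> g b)) \<and>
     (\<forall>g\<in>G. \<forall>a\<in>D (gdom gm gi g). \<alpha> (gdom gm gi g) a = a) \<and>
     (\<forall>g h. composable G gm gi g h \<longrightarrow>
        preim D \<alpha> gi h (D (gi g) \<inter> D h) \<subseteq> D (gi (gm g h))) \<and>
     (\<forall>g h. composable G gm gi g h \<longrightarrow>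
        invertible_multiplier (ideal_prod (D g) (D (gm g h))) (w g h) \<and>
        (\<exists>w'. inverse_multiplier (ideal_prod (D g) (D (gm g h))) (w g h) w' \<and>
           (\<forall>a \<in> preim D \<alpha> gi h (D (gi g) \<inter> D h).
              \<alpha> g (\<alpha> h a) = snd w' (fst (w g h) (\<alpha> (gm g h) a))))) \<and>
     (\<forall>g\<in>G. (\<forall>c\<in>ideal_prod (D g) (D (gm g (gdom gm gi g))).
                 fst (w g (gdom gm gi g)) c = c \<and> snd (w g (gdom gm gi g)) c = c) \<and>
            (\<forall>c\<in>ideal_prod (D (gran gm gi g)) (D (gm (gran gm gi g) g)).
                 fst (w (gran gm gi g) g) c = c \<and> snd (w (gran gm gi g) g) c = c)) \<and>
     (\<forall>g h l. composable G gm gi g h \<and> composable G gm gi h l \<longrightarrow>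
        (\<forall>a\<in>ideal_prod (ideal_prod (D (gi g)) (D h)) (D (gm h l)).
           snd (w g (gm h l)) (\<alpha> g (snd (w h l) a)) = snd (w (gm g h) l) (snd (w g h) (\<alpha> g a))))"

definition rcp_carrier :: "'g set \<Rightarrow> ('g \<Rightarrow> 'a::ring set) \<Rightarrow> ('g \<Rightarrow> 'a) set" where
  "rcp_carrier G D = {f. finite {g. f g \<noteq> 0} \<and> (\<forall>g. f g \<noteq> 0 \<longrightarrow> g \<in> G \<and> f g \<in> D g)}"

definition rcp_mult ::
  "'g set \<Rightarrow> ('g \<Rightarrow> 'g \<Rightarrow> 'g) \<Rightarrow> ('g \<Rightarrow> 'g) \<Rightarrow> ('g \<Rightarrow> 'a::ring set) \<Rightarrow> ('g \<Rightarrow> 'a \<Rightarrow> 'a) \<Rightarrow>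
   ('g \<Rightarrow> 'g \<Rightarrow> ('a \<Rightarrow> 'a) \<times> ('a \<Rightarrow> 'a)) \<Rightarrow> ('g \<Rightarrow> 'a) \<Rightarrow> ('g \<Rightarrow> 'a) \<Rightarrow> ('g \<Rightarrow> 'a)" where
  "rcp_mult G gm gi D \<alpha> w f h = (\<lambda>z.
     \<Sum>(x, y) \<in> {(x, y). composable G gm gi x y \<and> gm x y = z \<and> f x \<noteq> 0 \<and> h y \<noteq> 0}.
        snd (w x y) (\<alpha> x (inv_into (D (gi x)) (\<alpha> x) (f x) * h y)))"

definition rcp_smul :: "('k \<Rightarrow> 'a \<Rightarrow> 'a) \<Rightarrow> 'k \<Rightarrow> ('g \<Rightarrow> 'a) \<Rightarrow> ('g \<Rightarrow> 'a)" where
  "rcp_smul smul c f = (\<lambda>g. smul c (f g))"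

definition rcp_zero :: "'g \<Rightarrow> 'a::ring" where
  "rcp_zero = (\<lambda>g. 0)"

text \<open>Elements of L/I: None is the zero, Some (a, x) with a in D x nonzero is a\<delta>_x;
  all 0\<delta>_x are identified with the zero.\<close>

definition scp_carrier :: "'g set \<Rightarrow> ('g \<Rightarrow> 'a::ring set) \<Rightarrow> ('a \<times> 'g) option set" where
  "scp_carrier G D = insert None {Some (a, x) | a x. x \<in> G \<and> a \<in> D x \<and> a \<noteq> 0}"

definition scp_mult ::
  "'g set \<Rightarrow> ('g \<Rightarrow> 'g \<Rightarrow> 'g) \<Rightarrow> ('g \<Rightarrow> 'g) \<Rightarrow> ('k \<Rightarrow> 'a::ring \<Rightarrow> 'a) \<Rightarrow> ('g \<Rightarrow> 'a set) \<Rightarrow>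
   ('g \<Rightarrow> 'a \<Rightarrow> 'a) \<Rightarrow> ('g \<Rightarrow> 'g \<Rightarrow> 'k) \<Rightarrow> ('a \<times> 'g) option \<Rightarrow> ('a \<times> 'g) option \<Rightarrow> ('a \<times> 'g) option" where
  "scp_mult G gm gi smul D \<theta> \<sigma> s t =
     (case (s, t) of
        (Some (a, x), Some (b, y)) \<Rightarrow>
          if composable G gm gi x y then
            (let c = smul (\<sigma> x y) (\<theta> x (inv_into (D (gi x)) (\<theta> x) a * b))
             in if c = 0 then None else Some (c, gm x y))
          else None
      | _ \<Rightarrow> None)"

definition scp_smul :: "('k \<Rightarrow> 'a::ring \<Rightarrow> 'a) \<Rightarrow> 'k \<Rightarrow> ('a \<times> 'g) option \<Rightarrow> ('a \<times> 'g) option" where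
  "scp_smul smul c s =
     (case s of None \<Rightarrow> None
      | Some (a, x) \<Rightarrow> (let b = smul c a in if b = 0 then None else Some (b, x)))"

definition scp_to_rcp :: "('a::ring \<times> 'g) option \<Rightarrow> ('g \<Rightarrow> 'a)" where
  "scp_to_rcp s = (case s of None \<Rightarrow> (\<lambda>g. 0) | Some (a, x) \<Rightarrow> (\<lambda>g. if g = x then a else 0))"

definition K_semigroup_mono ::
  "('s \<Rightarrow> 't) \<Rightarrow> 's set \<Rightarrow> ('s \<Rightarrow> 's \<Rightarrow> 's) \<Rightarrow> ('k \<Rightarrow> 's \<Rightarrow> 's) \<Rightarrow> 's \<Rightarrow>
   't set \<Rightarrow> ('t \<Rightarrow> 't \<Rightarrow> 't) \<Rightarrow> ('k \<Rightarrow> 't \<Rightarrow> 't) \<Rightarrow> 't \<Rightarrow> bool" where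
  "K_semigroup_mono \<phi> S mS sS zS T mT sT zT \<longleftrightarrow>
     (\<forall>s\<in>S. \<phi> s \<in> T) \<and> inj_on \<phi> S \<and>
     (\<forall>s\<in>S. \<forall>t\<in>S. \<phi> (mS s t) = mT (\<phi> s) (\<phi> t)) \<and>
     (\<forall>c. \<forall>s\<in>S. \<phi> (sS c s) = sT c (\<phi> s)) \<and>
     \<phi> zS = zT"

end

theory Submission imports Defs begin

lemma gi_mult:
  assumes g: "groupoid G gm gi" and c: "composable G gm gi u v"
  shows "gi (gm u v) = gm (gi v) (gi u)"
proof -
  note gd = g[unfolded groupoid_def]
  have uG: "u \<in> G" and vG: "v \<in> G" and duv: "gm (gi u) u = gm v (gi v)"
    using c by (auto simp: composable_def gdom_def gran_def)
  have iu: "gi u \<in> G" "gi (gi u) = u" and iv: "gi v \<in> G" "gi (gi v) = v" using gd uG vG by auto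
  define q where "q = gm u v"
  have qG: "q \<in> G" and dq: "gm (gi q) q = gm (gi v) v" and rq: "gm q (gi q) = gm u (gi u)"
    using gd c by (auto simp: q_def gdom_def gran_def)
  have iq: "gi q \<in> G" "gi (gi q) = q" using gd qG by auto
  have C: "\<And>a b. a \<in> G \<Longrightarrow> b \<in> G \<Longrightarrow> gm (gi a) a = gm b (gi b) \<Longrightarrow> composable G gm gi a b"
    by (auto simp: composable_def gdom_def gran_def)
  have M: "\<And>a b. composable G gm gi a b \<Longrightarrow> gm a b \<in> G \<and> gm (gi (gm a b)) (gm a b) = gm (gi b) b \<and> gm (gm a b) (gi (gm a b)) = gm a (gi a)"
    using gd by (auto simp: gdom_def gran_def)
  have A: "\<And>a b c. composable G gm gi a b \<Longrightarrow> composable G gm gi b c \<Longrightarrow> gm (gm a b) c = gm a (gm b c)"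
    using gd by blast
  have U: "\<And>a. a \<in> G \<Longrightarrow> gm a (gm (gi a) a) = a \<and> gm (gm a (gi a)) a = a"
    using gd by (auto simp: gdom_def gran_def)
  have c1: "composable G gm gi v (gi v)" using C[OF vG iv(1)] iv by simp
  have c2: "composable G gm gi q (gi v)" using C[OF qG iv(1)] dq iv by simp
  have u_eq: "u = gm q (gi v)"
  proof -
    have "u = gm u (gm (gi u) u)" using U uG by simp
    also have "\<dots> = gm u (gm v (gi v))" using duv by simp
    also have "\<dots> = gm q (gi v)" using A[OF c c1] q_def by simp
    finally show ?thesis .
  qed
  have c3: "composable G gm gi (gi q) q" using C[OF iq(1) qG] iq by simp
  have qiu: "gm (gi q) u = gi v"
  proof -
    have "gm (gi q) u = gm (gi q) (gm q (gi v))" using u_eq by simp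
    also have "\<dots> = gm (gm (gi q) q) (gi v)" using A[OF c3 c2] by simp
    also have "\<dots> = gm (gm (gi v) v) (gi v)" using dq by simp
    also have "\<dots> = gi v" using U[OF iv(1)] iv by simp
    finally show ?thesis .
  qed
  have c4: "composable G gm gi (gi q) u" using C[OF iq(1) uG] iq rq q_def
    by (metis M c) 
  have c5: "composable G gm gi u (gi u)" using C[OF uG iu(1)] iu by simp
  have "gi q = gm (gi q) (gm (gi (gi q)) (gi q))" using U[OF iq(1)] by simp
  also have "\<dots> = gm (gi q) (gm u (gi u))" using iq rq by simp
  also have "\<dots> = gm (gm (gi q) u) (gi u)" using A[OF c4 c5] by simp
  also have "\<dots> = gm (gi v) (gi u)" using qiu by simp
  finally show ?thesis using q_def by simp
qed

lemma gfacts: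
  assumes g: "groupoid G gm gi" and x: "x \<in> G"
  shows "gi x \<in> G" "gi (gi x) = x" "composable G gm gi (gi x) x" "composable G gm gi x (gi x)"
    "gran gm gi (gi x) = gdom gm gi x" "gdom gm gi (gi x) = gran gm gi x"
  using g x unfolding groupoid_def composable_def gdom_def gran_def by auto

lemma unital_prod:
  assumes "unital_set I" "p \<in> I" "p \<in> J"
  shows "p \<in> ideal_prod I J"
proof -
  obtain u where "u \<in> I" "u * p = p" using assms unfolding unital_set_def by blast
  then show ?thesis using ideal_prod.prod[of u I p J] assms by simp
qed

lemma inv_alpha:
  assumes g: "groupoid G gm gi"
    and t: "ring_twisted_partial_action G gm gi smul D \<alpha> w"
    and un: "\<forall>g\<in>G. unital_set (D g)"
    and wk: "\<forall>x y. composable G gm gi x y \<longrightarrow>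
           (\<forall>c\<in>ideal_prod (D x) (D (gm x y)).
              fst (w x y) c = smul (k x y) c \<and> snd (w x y) c = smul (k x y) c)"
    and x: "x \<in> G" and p: "p \<in> D (gi x)"
  shows "\<alpha> (gi x) (\<alpha> x p) = p"
proof -
  note gf = gfacts[OF g x]
  note td = t[unfolded ring_twisted_partial_action_def]
  have ax: "\<alpha> x p \<in> D x" using td x p unfolding bij_betw_def by blast
  have "alg_ideal smul (D (gran gm gi (gi x))) (D (gi x))" using td gf(1) by blast
  hence pd: "p \<in> D (gdom gm gi x)" using p gf(5) unfolding alg_ideal_def by auto
  have gmx: "gm (gi x) x = gdom gm gi x" by (simp add: gdom_def)
  have id: "\<alpha> (gdom gm gi x) p = p" using td x pd by blast
  obtain w' where iw: "inverse_multiplier (ideal_prod (D (gi x)) (D (gm (gi x) x))) (w (gi x) x) w'"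
    and eq: "\<forall>a \<in> preim D \<alpha> gi x (D (gi (gi x)) \<inter> D x).
              \<alpha> (gi x) (\<alpha> x a) = snd w' (fst (w (gi x) x) (\<alpha> (gm (gi x) x) a))"
    using td gf(3) by blast
  have pp: "p \<in> preim D \<alpha> gi x (D (gi (gi x)) \<inter> D x)" using p ax gf(2) by (simp add: preim_def)
  have pI: "p \<in> ideal_prod (D (gi x)) (D (gm (gi x) x))"
    using unital_prod[of "D (gi x)" p] un gf(1) p pd gmx by simp
  have "\<alpha> (gi x) (\<alpha> x p) = snd w' (fst (w (gi x) x) p)" using eq pp id gmx by simp
  also have "\<dots> = snd w' (snd (w (gi x) x) p)" using wk gf(3) pI by simp
  also have "\<dots> = p" using iw pI unfolding inverse_multiplier_def by blast
  finally show ?thesis .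
qed

lemma key:
  assumes g: "groupoid G gm gi"
    and t: "ring_twisted_partial_action G gm gi smul D \<alpha> w"
    and un: "\<forall>g\<in>G. unital_set (D g)"
    and wk: "\<forall>x y. composable G gm gi x y \<longrightarrow>
           (\<forall>c\<in>ideal_prod (D x) (D (gm x y)).
              fst (w x y) c = smul (k x y) c \<and> snd (w x y) c = smul (k x y) c)"
    and c: "composable G gm gi x y" and a: "a \<in> D x" and b: "b \<in> D y"
  shows "\<alpha> x (inv_into (D (gi x)) (\<alpha> x) a * b) \<in> D x \<inter> D (gm x y)"
proof -
  have x: "x \<in> G" and y: "y \<in> G" and dr: "gdom gm gi x = gran gm gi y" using c by (auto simp: composable_def)
  note gx = gfacts[OF g x] and gy = gfacts[OF g y]
  note td = t[unfolded ring_twisted_partial_action_def]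
  define a' where "a' = inv_into (D (gi x)) (\<alpha> x) a"
  have bij: "bij_betw (\<alpha> x) (D (gi x)) (D x)" using td x by blast
  have a': "a' \<in> D (gi x)" using bij a unfolding a'_def
    by (metis bij_betw_def inv_into_into)
  have i1: "alg_ideal smul (D (gran gm gi (gi x))) (D (gi x))" using td gx(1) by blast
  have i2: "alg_ideal smul (D (gran gm gi y)) (D y)" using td y by blast
  have bR: "b \<in> D (gran gm gi (gi x))" using i2 b gx(5) dr unfolding alg_ideal_def by auto
  have aR: "a' \<in> D (gran gm gi y)" using i1 a' gx(5) dr unfolding alg_ideal_def by auto
  have ab1: "a' * b \<in> D (gi x)" using i1 a' bR unfolding alg_ideal_def by blast
  have ab2: "a' * b \<in> D y" using i2 b aR unfolding alg_ideal_def by blast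
  define tt where "tt = \<alpha> x (a' * b)"
  have tx: "tt \<in> D x" using bij ab1 unfolding tt_def bij_betw_def by blast
  have inv: "\<alpha> (gi x) tt = a' * b" unfolding tt_def using inv_alpha[OF g t un wk x ab1] .
  have cc: "composable G gm gi (gi y) (gi x)" using gx gy dr by (auto simp: composable_def)
  have "preim D \<alpha> gi (gi x) (D (gi (gi y)) \<inter> D (gi x)) \<subseteq> D (gi (gm (gi y) (gi x)))"
    using td cc by blast
  moreover have "tt \<in> preim D \<alpha> gi (gi x) (D (gi (gi y)) \<inter> D (gi x))"
    using tx inv ab1 ab2 gx gy by (simp add: preim_def)
  moreover have "gi (gm (gi y) (gi x)) = gm x y" using gi_mult[OF g cc] gx gy by simp
  ultimately show ?thesis using tx unfolding tt_def a'_def by auto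
qed


lemma smul_zero:
  assumes "K_algebra smul" shows "smul c (0::'a::ring) = 0"
proof -
  have "smul c (0 + 0) = smul c 0 + smul c (0::'a)" using assms unfolding K_algebra_def by blast
  thus ?thesis by simp
qed

lemma rcp_mult_single:
  assumes a: "a \<noteq> 0" and b: "b \<noteq> 0"
  shows "rcp_mult G gm gi D \<alpha> w (\<lambda>g. if g = x then a else 0) (\<lambda>g. if g = y then b else 0) =
    (\<lambda>z. if composable G gm gi x y \<and> z = gm x y
         then snd (w x y) (\<alpha> x (inv_into (D (gi x)) (\<alpha> x) a * b)) else 0)"
proof
  fix z
  have "{(x', y'). composable G gm gi x' y' \<and> gm x' y' = z \<and> (if x' = x then a else 0) \<noteq> 0
          \<and> (if y' = y then b else 0) \<noteq> 0}
        = (if composable G gm gi x y \<and> z = gm x y then {(x, y)} else {})"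
    using a b by (auto split: if_splits)
  then show "rcp_mult G gm gi D \<alpha> w (\<lambda>g. if g = x then a else 0) (\<lambda>g. if g = y then b else 0) z =
    (if composable G gm gi x y \<and> z = gm x y
         then snd (w x y) (\<alpha> x (inv_into (D (gi x)) (\<alpha> x) a * b)) else 0)"
    unfolding rcp_mult_def by simp
qed

lemma rcp_mult_zero1: "rcp_mult G gm gi D \<alpha> w (\<lambda>g. 0) h = (\<lambda>g. 0)"
  unfolding rcp_mult_def by simp

lemma rcp_mult_zero2: "rcp_mult G gm gi D \<alpha> w f (\<lambda>g. 0) = (\<lambda>g. 0)"
  unfolding rcp_mult_def by simp

theorem mainTheorem13:
  fixes G :: "'g set" and gm :: "'g \<Rightarrow> 'g \<Rightarrow> 'g" and gi :: "'g \<Rightarrow> 'g"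
    and smul :: "'k::field \<Rightarrow> 'a::ring \<Rightarrow> 'a"
    and D :: "'g \<Rightarrow> 'a set" and \<alpha> :: "'g \<Rightarrow> 'a \<Rightarrow> 'a"
    and w :: "'g \<Rightarrow> 'g \<Rightarrow> ('a \<Rightarrow> 'a) \<times> ('a \<Rightarrow> 'a)" and k :: "'g \<Rightarrow> 'g \<Rightarrow> 'k"
  assumes "groupoid G gm gi"
    and "K_algebra smul"
    and "K_cancellative smul 0"
    and "ring_twisted_partial_action G gm gi smul D \<alpha> w"
    and "\<forall>g\<in>G. unital_set (D g)"
    and "\<forall>x y. composable G gm gi x y \<longrightarrow>
           (\<forall>c\<in>ideal_prod (D x) (D (gm x y)).
              fst (w x y) c = smul (k x y) c \<and> snd (w x y) c = smul (k x y) c)"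
    and "\<forall>x y. \<not> composable G gm gi x y \<longrightarrow> k x y = 0"
  shows "K_semigroup_mono scp_to_rcp
           (scp_carrier G D) (scp_mult G gm gi smul D \<alpha> k) (scp_smul smul) None
           (rcp_carrier G D) (rcp_mult G gm gi D \<alpha> w) (rcp_smul smul) rcp_zero"
proof -
  note g = assms(1) and t = assms(4) and un = assms(5) and wk = assms(6)
  have p1: "\<forall>s\<in>scp_carrier G D. scp_to_rcp s \<in> rcp_carrier G D"
  proof
    fix s assume "s \<in> scp_carrier G D"
    then show "scp_to_rcp s \<in> rcp_carrier G D"
    proof (cases s)
      case None then show ?thesis by (simp add: scp_to_rcp_def rcp_carrier_def)
    next
      case (Some p)
      then obtain a x where "s = Some (a, x)" "x \<in> G" "a \<in> D x" "a \<noteq> 0"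
        using \<open>s \<in> scp_carrier G D\<close> by (auto simp: scp_carrier_def)
      moreover have "{g. (if g = x then a else 0) \<noteq> 0} = {x}" using \<open>a \<noteq> 0\<close> by auto
      ultimately show ?thesis by (simp add: scp_to_rcp_def rcp_carrier_def)
    qed
  qed
  have p2: "inj_on scp_to_rcp (scp_carrier G D)"
  proof (rule inj_onI)
    fix s t assume s: "s \<in> scp_carrier G D" and t: "t \<in> scp_carrier G D" and e: "scp_to_rcp s = scp_to_rcp t"
    show "s = t"
    proof (cases s; cases t)
      fix p q assume "s = Some p" "t = Some q"
      then obtain a x b y where "s = Some (a, x)" "a \<noteq> 0" "t = Some (b, y)" "b \<noteq> 0"
        using s t by (auto simp: scp_carrier_def)
      with e show ?thesis unfolding scp_to_rcp_def
        by simp (metis)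
    qed (use s t e in \<open>auto simp: scp_carrier_def scp_to_rcp_def fun_eq_iff split: if_splits\<close>)
  qed
  have p3: "\<forall>s\<in>scp_carrier G D. \<forall>t\<in>scp_carrier G D.
      scp_to_rcp (scp_mult G gm gi smul D \<alpha> k s t) = rcp_mult G gm gi D \<alpha> w (scp_to_rcp s) (scp_to_rcp t)"
  proof (intro ballI)
    fix s t assume s: "s \<in> scp_carrier G D" and t: "t \<in> scp_carrier G D"
    show "scp_to_rcp (scp_mult G gm gi smul D \<alpha> k s t) = rcp_mult G gm gi D \<alpha> w (scp_to_rcp s) (scp_to_rcp t)"
    proof (cases "s = None \<or> t = None")
      case True then show ?thesis
        by (auto simp: scp_mult_def scp_to_rcp_def rcp_mult_zero1 rcp_mult_zero2 split: option.splits)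
    next
      case False
      then obtain a x b y where sa: "s = Some (a, x)" "x \<in> G" "a \<in> D x" "a \<noteq> 0"
        and tb: "t = Some (b, y)" "y \<in> G" "b \<in> D y" "b \<noteq> 0"
        using s t by (auto simp: scp_carrier_def)
      define c0 where "c0 = \<alpha> x (inv_into (D (gi x)) (\<alpha> x) a * b)"
      show ?thesis
      proof (cases "composable G gm gi x y")
        case False then show ?thesis using sa tb
          by (simp add: scp_mult_def scp_to_rcp_def rcp_mult_single)
      next
        case True
        have "c0 \<in> D x \<inter> D (gm x y)" unfolding c0_def using key[OF g assms(4) un wk True sa(3) tb(3)] .
        hence "c0 \<in> ideal_prod (D x) (D (gm x y))" using unital_prod[of "D x" c0] un sa(2) by auto
        hence sw: "snd (w x y) c0 = smul (k x y) c0" using wk True by blast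
        show ?thesis using sa tb True sw
          by (simp add: scp_mult_def scp_to_rcp_def rcp_mult_single c0_def[symmetric] Let_def fun_eq_iff)
      qed
    qed
  qed
  have p4: "\<forall>c. \<forall>s\<in>scp_carrier G D. scp_to_rcp (scp_smul smul c s) = rcp_smul smul c (scp_to_rcp s)"
    using smul_zero[OF assms(2)]
    by (auto simp: scp_smul_def scp_to_rcp_def rcp_smul_def Let_def fun_eq_iff split: option.splits)
  show ?thesis unfolding K_semigroup_mono_def
    using p1 p2 p3 p4 by (simp add: scp_to_rcp_def rcp_zero_def)
qed

end
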